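(* Consider two sets of matrices $\mathbf{A}_1, \dots, \mathbf{A}_s$ and $\hat{\mathbf{A}}_1, \dots, \hat{\mathbf{A}}_s$ with $\|\mathbf{A}_i - \hat{\mathbf{A}}_i\| \leq \epsilon_{\mathbf{A}}$ for all $i \in [s]$. Assume there exists a pair $\{\xi, \kappa\}$ such that for all $t \in \mathbb{N}$, $\max_{\sigma_{1:t} \in [s]^{t}}\|\mathbf{A}_{\sigma_1} \cdots \mathbf{A}_{\sigma_t}\| \leq \kappa \xi^t$. Then, for all $t$ and any sequence $\sigma_{1:t} \in [s]^{t}$, we have (i) $\|\prod_{h=1}^t \hat{\mathbf{A}}_{\sigma_h}\| \leq \kappa (\kappa \epsilon_{\mathbf{A}} + \xi)^t$; (ii) $\|\prod_{h=1}^t \hat{\mathbf{A}}_{\sigma_h} - \prod_{h=1}^t \mathbf{A}_{\sigma_h}\| \leq \kappa^2 t (\kappa \epsilon_{\mathbf{A}} + \xi)^{t-1} \epsilon_{\mathbf{A}}$. *)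

theory Defs
  imports "HOL-Analysis.Analysis"
begin

definition mnorm :: "real^'n^'n \<Rightarrow> real" where
  "mnorm M = onorm (\<lambda>x. M *v x)"

fun mprod :: "(nat \<Rightarrow> real^'n^'n) \<Rightarrow> (nat \<Rightarrow> nat) \<Rightarrow> nat \<Rightarrow> real^'n^'n" where
  "mprod A \<sigma> 0 = mat 1"
| "mprod A \<sigma> (Suc t) = mprod A \<sigma> t ** A (\<sigma> (Suc t))"

end

theory Submission
  imports Defs
begin

lemma mn_nonneg: "mnorm M \<ge> 0" unfolding mnorm_def by (rule onorm_pos_le) simp
lemma mn_mul: "mnorm (X ** Y) \<le> mnorm X * mnorm Y"
proof -
  have "(\<lambda>x. (X ** Y) *v x) = (\<lambda>x. X *v x) \<circ> (\<lambda>x. Y *v x)"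
    by (auto simp: matrix_vector_mul_assoc[symmetric])
  then show ?thesis unfolding mnorm_def by (metis onorm_compose matrix_vector_mul_bounded_linear)
qed
lemma mn_add: "mnorm (X + Y) \<le> mnorm X + mnorm Y"
proof -
  have "(\<lambda>x. (X + Y) *v x) = (\<lambda>x. X *v x + Y *v x)"
    by (auto simp: matrix_vector_mult_add_rdistrib)
  then show ?thesis unfolding mnorm_def by (metis onorm_triangle matrix_vector_mul_bounded_linear)
qed
lemma mn_id: "mnorm (mat 1 :: real^'n^'n) = 1"
proof -
  have "((*v) (mat 1 :: real^'n^'n)) = (\<lambda>x. x)" by (rule ext) simp
  then show ?thesis unfolding mnorm_def by (simp add: onorm_id)
qed
lemma mn_zero: "mnorm (0 :: real^'n^'n) = 0"
proof -
  have "((*v) (0 :: real^'n^'n)) = (\<lambda>x. 0)" by (rule ext) simp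
  then show ?thesis unfolding mnorm_def by (simp add: onorm_zero)
qed
lemma mm_add_r: "((X::real^'n^'n) + Y) ** Z = X ** Z + Y ** Z"
  by (simp add: vec_eq_iff matrix_matrix_mult_def sum.distrib algebra_simps)
lemma mm_zero_l: "(0::real^'n^'n) ** Z = 0"
  by (simp add: vec_eq_iff matrix_matrix_mult_def)
lemma mn_sum: "finite S \<Longrightarrow> mnorm (\<Sum>h\<in>S. f h) \<le> (\<Sum>h\<in>S. mnorm (f h))"
  by (induction S rule: finite_induct) (auto simp: mn_zero intro: order_trans[OF mn_add])
lemma mm_sub_l: "(X::real^'n^'n) ** (Y - Z) = X ** Y - X ** Z"
  by (simp add: vec_eq_iff matrix_matrix_mult_def sum_subtractf algebra_simps)
lemma mm_sum_r: "finite S \<Longrightarrow> (\<Sum>h\<in>S. (f h::real^'n^'n)) ** (X::real^'n^'n) = (\<Sum>h\<in>S. f h ** X)"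
  by (induction S rule: finite_induct) (auto simp: mm_add_r mm_zero_l)
lemma mm_sub_r: "((X::real^'n^'n) - Y) ** Z = X ** Z - Y ** Z"
  by (simp add: vec_eq_iff matrix_matrix_mult_def sum_subtractf algebra_simps)
lemma mn_sym: "mnorm ((X::real^'n^'n) - Y) = mnorm (Y - X)"
proof -
  have "((*v) (X - Y)) = (\<lambda>x. - ((Y - X) *v x))"
    by (rule ext) (simp add: vec_eq_iff matrix_vector_mult_def sum_subtractf algebra_simps)
  then show ?thesis unfolding mnorm_def by (simp add: onorm_neg)
qed

lemma mprod_diff:
 "mprod Ahat \<sigma> t - mprod A \<sigma> t = (\<Sum>h<t. mprod Ahat \<sigma> h ** (Ahat (\<sigma> (Suc h)) - A (\<sigma> (Suc h))) ** mprod A (\<lambda>j. \<sigma> (j + Suc h)) (t - Suc h))"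
proof (induction t)
  case 0
  then show ?case by simp
next
  case (Suc t)
  have split: "mprod Ahat \<sigma> (Suc t) - mprod A \<sigma> (Suc t) = mprod Ahat \<sigma> t ** (Ahat(\<sigma>(Suc t)) - A(\<sigma>(Suc t))) + (mprod Ahat \<sigma> t - mprod A \<sigma> t) ** A (\<sigma> (Suc t))"
    by (simp add: mm_sub_l mm_sub_r)
  have terms: "mprod Ahat \<sigma> h ** (Ahat (\<sigma> (Suc h)) - A (\<sigma> (Suc h))) ** mprod A (\<lambda>j. \<sigma> (j + Suc h)) (t - Suc h) ** A (\<sigma> (Suc t))
     = mprod Ahat \<sigma> h ** (Ahat (\<sigma> (Suc h)) - A (\<sigma> (Suc h))) ** mprod A (\<lambda>j. \<sigma> (j + Suc h)) (Suc t - Suc h)" if "h < t" for h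
  proof -
    have e: "Suc t - Suc h = Suc (t - Suc h)" using that by simp
    have e2: "Suc (Suc (t - Suc h + h)) = Suc t" using that by simp
    show ?thesis unfolding e by (simp add: e2 matrix_mul_assoc)
  qed
  have S: "(\<Sum>h<t. mprod Ahat \<sigma> h ** (Ahat (\<sigma> (Suc h)) - A (\<sigma> (Suc h))) ** mprod A (\<lambda>j. \<sigma> (j + Suc h)) (t - Suc h)) ** A (\<sigma> (Suc t))
    = (\<Sum>h<t. mprod Ahat \<sigma> h ** (Ahat (\<sigma> (Suc h)) - A (\<sigma> (Suc h))) ** mprod A (\<lambda>j. \<sigma> (j + Suc h)) (Suc t - Suc h))"
    unfolding mm_sum_r[OF finite_lessThan] by (rule sum.cong[OF refl]) (rule terms, simp)
  show ?case unfolding split Suc S sum.lessThan_Suc by (simp add: add.commute)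
qed
theorem lemma10:
  fixes A Ahat :: "nat \<Rightarrow> real^'n^'n" and s :: nat and \<epsilon> \<kappa> \<xi> :: real
  assumes close: "\<forall>i\<in>{1..s}. mnorm (A i - Ahat i) \<le> \<epsilon>"
    and stable: "\<forall>t::nat. \<forall>\<sigma>. (\<forall>h\<in>{1..t}. \<sigma> h \<in> {1..s}) \<longrightarrow>
                    mnorm (mprod A \<sigma> t) \<le> \<kappa> * \<xi> ^ t"
  shows "\<forall>t::nat. \<forall>\<sigma>. (\<forall>h\<in>{1..t}. \<sigma> h \<in> {1..s}) \<longrightarrow>
           mnorm (mprod Ahat \<sigma> t) \<le> \<kappa> * (\<kappa> * \<epsilon> + \<xi>) ^ t
         \<and> mnorm (mprod Ahat \<sigma> t - mprod A \<sigma> t)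
             \<le> \<kappa>^2 * real t * (\<kappa> * \<epsilon> + \<xi>) ^ (t - 1) * \<epsilon>"
proof -
  have k1: "1 \<le> \<kappa>" using stable[rule_format, of 0 "\<lambda>_. 1"] mn_id[where 'n='n] by simp
  define c where "c = \<kappa>*\<epsilon>+\<xi>"
  have pos: "0 \<le> \<epsilon> \<and> 0 \<le> \<xi>" if "t \<ge> 1" "\<forall>h\<in>{1..t}. \<sigma> h \<in> {1..s}" for t :: nat and \<sigma> :: "nat \<Rightarrow> nat"
  proof -
    have "1 \<in> {1..t}" using that(1) by simp
    then have s1: "\<sigma> 1 \<in> {1..s}" using that(2) by blast
    then have "mnorm (A (\<sigma> 1) - Ahat (\<sigma> 1)) \<le> \<epsilon>" using close by blast
    then have e: "0 \<le> \<epsilon>" using mn_nonneg[of "A (\<sigma> 1) - Ahat (\<sigma> 1)"] by linarith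
    have "mnorm (mprod A (\<lambda>_. \<sigma> 1) 1) \<le> \<kappa> * \<xi>^1" using s1 by (intro stable[rule_format]) auto
    hence "0 \<le> \<kappa>*\<xi>" using mn_nonneg by (metis order_trans power_one_right)
    with k1 have "0 \<le> \<xi>" by (simp add: zero_le_mult_iff)
    with e show ?thesis by simp
  qed
  have diffb: "mnorm (mprod Ahat \<sigma> t - mprod A \<sigma> t) \<le> \<kappa>^2 * \<epsilon> * (\<Sum>h<t. c^h * \<xi>^(t - Suc h))"
     if valid: "\<forall>h\<in>{1..t}. \<sigma> h \<in> {1..s}" and IH: "\<forall>h<t. mnorm (mprod Ahat \<sigma> h) \<le> \<kappa> * c^h" for t \<sigma>
  proof -
    have "mnorm (mprod Ahat \<sigma> t - mprod A \<sigma> t) \<le> (\<Sum>h<t. mnorm (mprod Ahat \<sigma> h ** (Ahat (\<sigma> (Suc h)) - A (\<sigma> (Suc h))) ** mprod A (\<lambda>j. \<sigma> (j + Suc h)) (t - Suc h)))"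
      by (subst mprod_diff) (rule mn_sum, simp)
    also have "\<dots> \<le> (\<Sum>h<t. \<kappa>^2*\<epsilon>*(c^h*\<xi>^(t - Suc h)))"
    proof (rule sum_mono)
      fix h assume "h \<in> {..<t}"
      then have ht: "h < t" by simp
      then have "1 \<le> t" by simp
      from pos[OF this valid] have ex: "0 \<le> \<epsilon>" "0 \<le> \<xi>" by auto
      have a: "mnorm (mprod Ahat \<sigma> h) \<le> \<kappa> * c^h" using IH ht by auto
      have "Suc h \<in> {1..t}" using ht by auto
      then have b: "mnorm (Ahat(\<sigma>(Suc h)) - A(\<sigma>(Suc h))) \<le> \<epsilon>" using close valid mn_sym by metis
      have r: "mnorm (mprod A (\<lambda>j. \<sigma> (j + Suc h)) (t - Suc h)) \<le> \<kappa> * \<xi>^(t - Suc h)"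
        using valid by (intro stable[rule_format]) auto
      have "mnorm (mprod Ahat \<sigma> h ** (Ahat (\<sigma> (Suc h)) - A (\<sigma> (Suc h))) ** mprod A (\<lambda>j. \<sigma> (j + Suc h)) (t - Suc h))
          \<le> mnorm (mprod Ahat \<sigma> h) * mnorm (Ahat (\<sigma> (Suc h)) - A (\<sigma> (Suc h))) * mnorm (mprod A (\<lambda>j. \<sigma> (j + Suc h)) (t - Suc h))"
        by (meson mn_mul mn_nonneg mult_right_mono order_trans)
      also have "\<dots> \<le> (\<kappa> * c^h) * \<epsilon> * (\<kappa> * \<xi>^(t - Suc h))"
        by (intro mult_mono a b r mn_nonneg mult_nonneg_nonneg) (use ex k1 in \<open>auto simp: c_def\<close>)
      finally show "mnorm (mprod Ahat \<sigma> h ** (Ahat (\<sigma> (Suc h)) - A (\<sigma> (Suc h))) ** mprod A (\<lambda>j. \<sigma> (j + Suc h)) (t - Suc h)) \<le> \<kappa>^2*\<epsilon>*(c^h*\<xi>^(t - Suc h))"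
        by (simp add: power2_eq_square algebra_simps)
    qed
    also have "\<dots> = \<kappa>^2 * \<epsilon> * (\<Sum>h<t. c^h * \<xi>^(t - Suc h))" by (simp add: sum_distrib_left)
    finally show ?thesis .
  qed
  have main_i: "\<forall>\<sigma>. (\<forall>h\<in>{1..t}. \<sigma> h \<in> {1..s}) \<longrightarrow> mnorm (mprod Ahat \<sigma> t) \<le> \<kappa> * c^t" for t
  proof (induction t rule: less_induct)
    case (less t)
    show ?case
    proof (intro allI impI)
      fix \<sigma> assume valid: "\<forall>h\<in>{1..t}. \<sigma> h \<in> {1..s}"
      have IH: "\<forall>h<t. mnorm (mprod Ahat \<sigma> h) \<le> \<kappa>*c^h"
        using less valid by auto
      have "mnorm (mprod Ahat \<sigma> t) = mnorm (mprod A \<sigma> t + (mprod Ahat \<sigma> t - mprod A \<sigma> t))" by simp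
      also have "\<dots> \<le> mnorm (mprod A \<sigma> t) + mnorm (mprod Ahat \<sigma> t - mprod A \<sigma> t)" by (rule mn_add)
      also have "\<dots> \<le> \<kappa> * \<xi>^t + \<kappa>^2 * \<epsilon> * (\<Sum>h<t. c^h * \<xi>^(t - Suc h))"
        using stable valid diffb[OF valid IH] by (intro add_mono) auto
      also have "\<dots> = \<kappa> * c^t"
      proof -
        have "c^t - \<xi>^t = (c - \<xi>) * (\<Sum>i<t. \<xi>^(t - Suc i) * c^i)" by (rule power_diff_sumr2)
        then have "c^t = \<xi>^t + \<kappa>*\<epsilon> * (\<Sum>h<t. c^h * \<xi>^(t - Suc h))"
          by (simp add: c_def mult.commute)
        then show ?thesis by (simp add: power2_eq_square algebra_simps)
      qed
      finally show "mnorm (mprod Ahat \<sigma> t) \<le> \<kappa> * c^t" .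
    qed
  qed
  show ?thesis
  proof (intro allI impI conjI)
    fix t and \<sigma> :: "nat \<Rightarrow> nat" assume valid: "\<forall>h\<in>{1..t}. \<sigma> h \<in> {1..s}"
    show "mnorm (mprod Ahat \<sigma> t) \<le> \<kappa> * (\<kappa> * \<epsilon> + \<xi>) ^ t" using main_i valid c_def by auto
    have IH: "\<forall>h<t. mnorm (mprod Ahat \<sigma> h) \<le> \<kappa>*c^h" using main_i valid by auto
    have "mnorm (mprod Ahat \<sigma> t - mprod A \<sigma> t) \<le> \<kappa>^2 * \<epsilon> * (\<Sum>h<t. c^h * \<xi>^(t - Suc h))"
      by (rule diffb[OF valid IH])
    also have "\<dots> \<le> \<kappa>^2 * \<epsilon> * (real t * c^(t-1))"
    proof (cases "t = 0")
      case True then show ?thesis by simp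
    next
      case False
      then have "1 \<le> t" by simp
      from pos[OF this valid] have ex: "0 \<le> \<epsilon>" "0 \<le> \<xi>" by auto
      have xc: "\<xi> \<le> c" using ex k1 c_def by simp
      have "(\<Sum>h<t. c^h * \<xi>^(t - Suc h)) \<le> (\<Sum>h<t. c^(t-1))"
      proof (rule sum_mono)
        fix h assume "h \<in> {..<t}"
        then have "h + (t - Suc h) = t - 1" by auto
        have "c^h * \<xi>^(t - Suc h) \<le> c^h * c^(t - Suc h)"
          using ex xc by (intro mult_left_mono power_mono) auto
        also have "\<dots> = c^(t-1)" using \<open>h + (t - Suc h) = t - 1\<close> by (metis power_add)
        finally show "c^h * \<xi>^(t - Suc h) \<le> c^(t-1)" .
      qed
      then have "(\<Sum>h<t. c^h * \<xi>^(t - Suc h)) \<le> real t * c^(t-1)" by simp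
      then show ?thesis using ex by (intro mult_left_mono) auto
    qed
    finally show "mnorm (mprod Ahat \<sigma> t - mprod A \<sigma> t) \<le> \<kappa>^2 * real t * (\<kappa> * \<epsilon> + \<xi>) ^ (t - 1) * \<epsilon>"
      by (simp add: c_def algebra_simps)
  qed
qed
end
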